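(* Let $(\ell_n)_{n\in\mathbb N}$ and $(\sigma_{n,0})_{n\in\mathbb N}$ be sequences of strictly positive reals, $(\kappa_n)_{n\in\mathbb N}$ a sequence of reals, and $(\sigma_{n,1})_{n\in\mathbb N}$, $(\sigma_{n,-1})_{n\in\mathbb N}$ sequences of nonnegative reals. Put $\sigma_n=\max(\sigma_{n,-1},\sigma_{n,1})$. Assume $$\liminf_{n\to\infty}\frac{1}{n^2}\Big(\frac{\ell_n}{\sigma_{n,0}}+\frac{(\kappa_n^-)^2}{\sigma_{n,0}^2}\Big)=0 .$$ Assume $\mathbb N$ is a disjoint union $\mathbb N=\mathbb N_a\cup\mathbb N_b$ such that (a) $2\sigma_n\le\sigma_{n,0}$ for every $n\in\mathbb N_a$, and (b) $\sigma_n\le\sigma_{n,0}<2\sigma_n$ and $-2(\sigma_{n,0}-\sigma_n)\sqrt{\ell_n}\le \kappa_n\sqrt{2\sigma_n-\sigma_{n,0}}$ for every $n\in\mathbb N_b$. Let $x_0\in\mathbb R$; if $1\in\mathbb N_a$, $x_0$ is arbitrary, while if $1\in\mathbb N_b$ assume additionally $$-2(\sigma_{1,0}-\sigma_1)\sqrt{\ell_1}\le(\sigma_{1,-1}x_0+\kappa_1)\sqrt{2\sigma_1-\sigma_{1,0}} .$$ Then there is at most one positive sequence $(x_n)_{n\in\mathbb N}$ satisfying $$\ell_n = x_n\big(\sigma_{n,1}x_{n+1}+\sigma_{n,0}x_n+\sigma_{n,-1}x_{n-1}\big)+\kappa_n x_n,\qquad n\in\mathbb N,$$ with the given $x_0$;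 equivalently, there is a number $x^\ast>0$ such that every positive solution has $x_1=x^\ast$, and any two positive solutions coincide.
   Context: $\mathbb N=\{1,2,3,\dots\}$. For $a\in\mathbb R$, $a^-=(|a|-a)/2$ denotes the negative part. A solution with given $x_0\in\mathbb R$ is a real sequence $(x_n)_{n\in\mathbb N}$ satisfying the displayed equation for all $n\in\mathbb N$ (where the $n=1$ equation involves the given $x_0$); it is positive if $x_n>0$ for all $n\in\mathbb N$. *)

theory Defs
  imports "HOL-Analysis.Analysis"
begin

definition neg_part :: "real \<Rightarrow> real" where
  "neg_part a = (\<bar>a\<bar> - a) / 2"

definition positive_solution ::
  "(nat \<Rightarrow> real) \<Rightarrow> (nat \<Rightarrow> real) \<Rightarrow> (nat \<Rightarrow> real) \<Rightarrow> (nat \<Rightarrow> real) \<Rightarrow> (nat \<Rightarrow> real)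
   \<Rightarrow> real \<Rightarrow> (nat \<Rightarrow> real) \<Rightarrow> bool" where
  "positive_solution l s0 sp sm \<kappa> x0 x \<longleftrightarrow>
     x 0 = x0 \<and> (\<forall>n\<ge>1. x n > 0) \<and>
     (\<forall>n\<ge>1. l n = x n * (sp n * x (Suc n) + s0 n * x n + sm n * x (n - 1)) + \<kappa> n * x n)"

end

theory Submission
  imports Defs
begin

lemma nb_bound:
  fixes c s L k x :: real
  assumes c: "c > 0" and cs: "c < 2 * s" and L: "L > 0" and x: "x > 0"
    and eq: "x*(c*x+k) \<le> L" and cond: "-2*(c-s)* sqrt L \<le> k* sqrt(2 * s - c)"
  shows "x^2*(2 * s - c) \<le> L"
proof (rule ccontr)
  define D where "D = 2 * s - c"
  have D: "D > 0" using cs D_def by simp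
  have sD: "sqrt D > 0" using D by simp
  have sL: "sqrt L > 0" using L by simp
  assume "\<not> x^2*(2 * s - c) \<le> L"
  hence gt: "x^2 * D > L" by (simp add: D_def)
  define t where "t = sqrt L / sqrt D"
  have t: "t > 0" using sD sL t_def by simp
  have t2: "t^2 = L / D" using D L by (simp add: t_def power_divide)
  have "sqrt (x^2*D) > sqrt L" using gt by simp
  hence "x * sqrt D > sqrt L" using x D by (simp add: real_sqrt_mult)
  hence xt: "x > t" using sD by (simp add: t_def pos_divide_less_eq)
  have cond': "k * sqrt D \<ge> (D - c) * sqrt L" using cond by (simp add: D_def algebra_simps)
  have "k * t = k * sqrt D * sqrt L / D"
    using sD D by (simp add: t_def field_simps)
  also have "\<dots> \<ge> (D - c) * sqrt L * sqrt L / D"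
    using cond' sL D by (simp add: divide_right_mono mult_right_mono)
  also have "(D - c) * sqrt L * sqrt L / D = (D - c) * L / D" using L by simp
  finally have kt: "k*t \<ge> (D - c)*L/D" .
  have "t*(c*t+k) = c * (L/D) + k*t" using t2 by (simp add: algebra_simps power2_eq_square)
  also have "\<dots> \<ge> c*(L/D) + (D - c)*L/D" using kt by simp
  also have "c*(L/D) + (D - c)*L/D = L" using D by (simp add: field_simps)
  finally have tt: "t*(c*t+k) \<ge> L" .
  have ctk: "c*t+k > 0"
  proof (rule ccontr)
    assume "\<not> c*t+k > 0"
    hence "t*(c*t+k) \<le> 0" using t by (simp add: mult_nonneg_nonpos)
    then show False using tt L by linarith
  qed
  have "c*x > 0" using c x by simp
  moreover have "c*(x+t) = c*x + c*t" by (simp add: algebra_simps)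
  ultimately have "c*(x+t) + k > 0" using ctk by linarith
  hence "(x - t)*(c*(x+t)+k) > 0" using xt by simp
  hence "x*(c*x+k) > t*(c*t+k)" by (simp add: algebra_simps power2_eq_square)
  thus False using tt eq by simp
qed

lemma gen_bound:
  fixes c L k x :: real
  assumes c: "c > 0" and x: "x > 0" and eq: "c*x^2 + k*x \<le> L"
  shows "x^2 \<le> 2*(L/c + (neg_part k)^2/c^2)"
proof -
  have np: "neg_part k \<ge> -k" "neg_part k \<ge> 0" by (auto simp: neg_part_def)
  have "-k * x \<le> neg_part k * x" using np x by (intro mult_right_mono) auto
  hence "c*x^2 \<le> L + neg_part k * x" using eq by simp
  also have "neg_part k * x \<le> (neg_part k)^2/(2*c) + c*x^2/2"
  proof -
    have "0 \<le> (neg_part k - c*x)^2/(2*c)" using c by simp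
    thus ?thesis using c by (simp add: field_simps power2_eq_square)
  qed
  finally have "c*x^2/2 \<le> L + (neg_part k)^2/(2*c)" by simp
  hence "x^2 \<le> 2*L/c + (neg_part k)^2/c^2" using c by (simp add: field_simps power2_eq_square)
  moreover have "(neg_part k)^2/c^2 \<ge> 0" by simp
  moreover have "2*L/c = 2*(L/c)" by simp
  ultimately show ?thesis by (smt (verit) distrib_left)
qed

theorem theorem5p2:
  fixes l s0 \<kappa> sp sm :: "nat \<Rightarrow> real" and Na Nb :: "nat set" and x0 :: real
  defines "\<sigma> \<equiv> (\<lambda>n. max (sm n) (sp n))"
  assumes l_pos: "\<forall>n\<ge>1. l n > 0"
    and s0_pos: "\<forall>n\<ge>1. s0 n > 0"
    and sp_nonneg: "\<forall>n\<ge>1. sp n \<ge> 0"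
    and sm_nonneg: "\<forall>n\<ge>1. sm n \<ge> 0"
    and liminf0: "liminf (\<lambda>n. ereal ((1 / (real n)^2) *
                    (l n / s0 n + (neg_part (\<kappa> n))^2 / (s0 n)^2))) = 0"
    and union: "Na \<union> Nb = {1..}"
    and disj: "Na \<inter> Nb = {}"
    and cond_a: "\<forall>n\<in>Na. 2 * \<sigma> n \<le> s0 n"
    and cond_b: "\<forall>n\<in>Nb. \<sigma> n \<le> s0 n \<and> s0 n < 2 * \<sigma> n \<and>
                   - 2 * (s0 n - \<sigma> n) * sqrt (l n) \<le> \<kappa> n * sqrt (2 * \<sigma> n - s0 n)"
    and x0_cond: "1 \<in> Nb \<Longrightarrow>
                   - 2 * (s0 1 - \<sigma> 1) * sqrt (l 1) \<le> (sm 1 * x0 + \<kappa> 1) * sqrt (2 * \<sigma> 1 - s0 1)"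
  shows "\<forall>x y. positive_solution l s0 sp sm \<kappa> x0 x \<and> positive_solution l s0 sp sm \<kappa> x0 y
                 \<longrightarrow> (\<forall>n. x n = y n)"
proof (rule allI, rule allI, rule impI)
  fix x y
  assume H: "positive_solution l s0 sp sm \<kappa> x0 x \<and> positive_solution l s0 sp sm \<kappa> x0 y"
  define Q where "Q n = l n / s0 n + (neg_part (\<kappa> n))^2 / (s0 n)^2" for n
  have nbb: "z n ^ 2 * (2 * \<sigma> n - s0 n) \<le> l n"
    if z: "positive_solution l s0 sp sm \<kappa> x0 z" and n: "n \<in> Nb" for z n
  proof -
    have n1: "n \<ge> 1" using n union by auto
    have zp: "\<forall>n\<ge>1. z n > 0" and z0: "z 0 = x0"
      and ze: "\<forall>n\<ge>1. l n = z n * (sp n * z (Suc n) + s0 n * z n + sm n * z (n - 1)) + \<kappa> n * z n"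
      using z unfolding positive_solution_def by auto
    have cb: "s0 n < 2 * \<sigma> n" using cond_b n by auto
    have "z (Suc n) > 0" using zp by simp
    hence sp0: "sp n * z (Suc n) \<ge> 0" using sp_nonneg n1 by simp
    have zn: "z n > 0" using zp n1 by simp
    show ?thesis
    proof (cases "n = 1")
      case True
      have "z n * (s0 n * z n + (sm 1 * x0 + \<kappa> 1)) \<le> l n"
      proof -
        have "z n * (sp n * z (Suc n)) \<ge> 0" using sp0 zn by simp
        moreover have "l n = z n * (sp n * z (Suc n)) + z n * (s0 n * z n + (sm 1 * x0 + \<kappa> 1))"
          using ze n1 True z0 by (simp add: algebra_simps)
        ultimately show ?thesis by linarith
      qed
      moreover have "- 2 * (s0 n - \<sigma> n) * sqrt (l n) \<le> (sm 1 * x0 + \<kappa> 1) * sqrt (2 * \<sigma> n - s0 n)"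
        using x0_cond n True by simp
      ultimately show ?thesis using nb_bound[of "s0 n" "\<sigma> n" "l n" "z n" "sm 1 * x0 + \<kappa> 1"]
        s0_pos l_pos n1 cb zn by auto
    next
      case False
      have "z n * (s0 n * z n + \<kappa> n) \<le> l n"
      proof -
        have "z (n - 1) > 0" using zp n1 False by simp
        hence "sm n * z (n - 1) \<ge> 0" using sm_nonneg n1 by simp
        hence "z n * (sp n * z (Suc n) + sm n * z (n - 1)) \<ge> 0" using sp0 zn by simp
        moreover have "l n = z n * (sp n * z (Suc n) + sm n * z (n - 1)) + z n * (s0 n * z n + \<kappa> n)"
          using ze n1 by (simp add: algebra_simps)
        ultimately show ?thesis by linarith
      qed
      moreover have "- 2 * (s0 n - \<sigma> n) * sqrt (l n) \<le> \<kappa> n * sqrt (2 * \<sigma> n - s0 n)"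
        using cond_b n by simp
      ultimately show ?thesis using nb_bound[of "s0 n" "\<sigma> n" "l n" "z n" "\<kappa> n"]
        s0_pos l_pos n1 cb zn by auto
    qed
  qed
  have gb: "z n ^ 2 \<le> 2 * Q n"
    if z: "positive_solution l s0 sp sm \<kappa> x0 z" and n: "n \<ge> 2" for z n
  proof -
    have n1: "n \<ge> 1" using n by simp
    have zp: "\<forall>n\<ge>1. z n > 0"
      and ze: "\<forall>n\<ge>1. l n = z n * (sp n * z (Suc n) + s0 n * z n + sm n * z (n - 1)) + \<kappa> n * z n"
      using z unfolding positive_solution_def by auto
    have zn: "z n > 0" using zp n1 by simp
    have "z (Suc n) > 0" using zp by simp
    hence "sp n * z (Suc n) \<ge> 0" using sp_nonneg n1 by simp
    moreover have "z (n - 1) > 0" using zp n by simp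
    hence "sm n * z (n - 1) \<ge> 0" using sm_nonneg n1 by simp
    ultimately have "z n * (sp n * z (Suc n) + sm n * z (n - 1)) \<ge> 0" using zn by simp
    moreover have "l n = z n * (sp n * z (Suc n) + sm n * z (n - 1)) + (s0 n * z n ^ 2 + \<kappa> n * z n)"
      using ze n1 by (simp add: algebra_simps power2_eq_square)
    ultimately have "s0 n * z n ^ 2 + \<kappa> n * z n \<le> l n" by linarith
    thus ?thesis using gen_bound[of "s0 n" "z n" "\<kappa> n" "l n"] s0_pos n1 zn by (simp add: Q_def)
  qed
  have hx: "positive_solution l s0 sp sm \<kappa> x0 x" and hy: "positive_solution l s0 sp sm \<kappa> x0 y"
    using H by auto
  have xp: "\<forall>n\<ge>1. x n > 0" and x0: "x 0 = x0"
    and xe: "\<forall>n\<ge>1. l n = x n * (sp n * x (Suc n) + s0 n * x n + sm n * x (n - 1)) + \<kappa> n * x n"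
    using hx unfolding positive_solution_def by auto
  have yp: "\<forall>n\<ge>1. y n > 0" and y0: "y 0 = x0"
    and ye: "\<forall>n\<ge>1. l n = y n * (sp n * y (Suc n) + s0 n * y n + sm n * y (n - 1)) + \<kappa> n * y n"
    using hy unfolding positive_solution_def by auto
  define d where "d n = x n - y n" for n
  define A where "A n = s0 n + l n / (x n * y n)" for n
  have Ak: "A n \<ge> 2 * \<sigma> n \<and> A n > 0" if n1: "n \<ge> 1" for n
  proof -
    have xy: "x n * y n > 0" using xp yp n1 by simp
    have K: "x n * y n * (2 * \<sigma> n - s0 n) \<le> l n"
    proof -
      have "n \<in> Na \<or> n \<in> Nb" using union n1 by auto
      thus ?thesis
      proof
        assume "n \<in> Na"
        hence "2 * \<sigma> n - s0 n \<le> 0" using cond_a by auto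
        hence "x n * y n * (2 * \<sigma> n - s0 n) \<le> 0" using xy by (simp add: mult_nonneg_nonpos)
        thus ?thesis using l_pos n1 by force
      next
        assume nb: "n \<in> Nb"
        have D: "2 * \<sigma> n - s0 n > 0" using cond_b nb by auto
        have a: "x n ^ 2 * (2 * \<sigma> n - s0 n) \<le> l n" using nbb[OF hx nb] .
        have b: "y n ^ 2 * (2 * \<sigma> n - s0 n) \<le> l n" using nbb[OF hy nb] .
        have "(x n ^ 2 * (2 * \<sigma> n - s0 n)) * (y n ^ 2 * (2 * \<sigma> n - s0 n)) \<le> l n * l n"
          using a b D l_pos n1 by (intro mult_mono) auto
        hence "(x n * y n * (2 * \<sigma> n - s0 n))^2 \<le> (l n)^2"
          by (simp add: power2_eq_square algebra_simps)
        moreover have "l n \<ge> 0" using l_pos n1 by (simp add: less_imp_le)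
        ultimately show ?thesis by (rule power2_le_imp_le)
      qed
    qed
    have "l n / (x n * y n) \<ge> 2 * \<sigma> n - s0 n" using K xy by (simp add: pos_le_divide_eq mult.commute)
    moreover have "l n / (x n * y n) > 0" using xy l_pos n1 by simp
    moreover have "s0 n > 0" using s0_pos n1 by simp
    ultimately show ?thesis unfolding A_def by linarith
  qed
  have deq: "sp n * d (Suc n) = - A n * d n - sm n * d (n - 1)" if n1: "n \<ge> 1" for n
  proof -
    have xn: "x n > 0" and yn: "y n > 0" using xp yp n1 by auto
    have ex: "l n / x n = sp n * x (Suc n) + s0 n * x n + sm n * x (n - 1) + \<kappa> n"
      using xe n1 xn by (simp add: field_simps)
    have ey: "l n / y n = sp n * y (Suc n) + s0 n * y n + sm n * y (n - 1) + \<kappa> n"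
      using ye n1 yn by (simp add: field_simps)
    have "l n / x n - l n / y n = - (l n / (x n * y n)) * (x n - y n)"
      using xn yn by (simp add: field_simps)
    thus ?thesis using ex ey by (simp add: d_def A_def algebra_simps)
  qed
  show "\<forall>n. x n = y n"
  proof (rule ccontr)
    assume "\<not> (\<forall>n. x n = y n)"
    hence ex: "\<exists>n. d n \<noteq> 0" by (auto simp: d_def)
    define m where "m = (LEAST n. d n \<noteq> 0)"
    have dm: "d m \<noteq> 0" using LeastI_ex[OF ex] by (simp add: m_def)
    have d0: "d 0 = 0" using x0 y0 by (simp add: d_def)
    hence m1: "m \<ge> 1" using dm by (cases m) auto
    have dm1: "d (m - 1) = 0" using not_less_Least[of "m - 1" "\<lambda>n. d n \<noteq> 0"] m1 by (simp add: m_def)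
    define e where "e = \<bar>d m\<bar>"
    have e: "e > 0" using dm by (simp add: e_def)
    have P: "d (m + k - 1) * d (m + k) \<le> 0 \<and> \<bar>d (m + k)\<bar> - \<bar>d (m + k - 1)\<bar> \<ge> e" for k
    proof (induction k)
      case 0
      then show ?case using dm1 by (simp add: e_def)
    next
      case (Suc k)
      define n where "n = m + k"
      have n1: "n \<ge> 1" using m1 by (simp add: n_def)
      have IH: "d (n - 1) * d n \<le> 0" "\<bar>d n\<bar> - \<bar>d (n - 1)\<bar> \<ge> e" using Suc.IH by (auto simp: n_def)
      have sn: "m + Suc k = Suc n" "m + Suc k - 1 = n" by (auto simp: n_def)
      have A: "A n \<ge> 2 * \<sigma> n" "A n > 0" using Ak[OF n1] by auto
      have sg: "sm n \<le> \<sigma> n" "sp n \<le> \<sigma> n" "sm n \<ge> 0" "sp n \<ge> 0"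
        using sm_nonneg sp_nonneg n1 by (auto simp: \<sigma>_def)
      define R where "R = A n * \<bar>d n\<bar> - sm n * \<bar>d (n - 1)\<bar>"
      have dn: "\<bar>d n\<bar> > 0" using IH(2) e by linarith
      have R1: "R \<ge> 2 * \<sigma> n * \<bar>d n\<bar> - \<sigma> n * \<bar>d (n - 1)\<bar>"
      proof -
        have "A n * \<bar>d n\<bar> \<ge> 2 * \<sigma> n * \<bar>d n\<bar>" using A by (intro mult_right_mono) auto
        moreover have "sm n * \<bar>d (n - 1)\<bar> \<le> \<sigma> n * \<bar>d (n - 1)\<bar>" using sg by (intro mult_right_mono) auto
        ultimately show ?thesis by (simp add: R_def)
      qed
      have R2: "R > 0"
      proof -
        have "sm n * \<bar>d (n - 1)\<bar> \<le> \<sigma> n * \<bar>d (n - 1)\<bar>" using sg by (intro mult_right_mono) auto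
        also have "\<dots> \<le> \<sigma> n * \<bar>d n\<bar>" using IH(2) e sg by (intro mult_left_mono) auto
        finally have "R \<ge> (A n - \<sigma> n) * \<bar>d n\<bar>" by (simp add: R_def algebra_simps)
        moreover have "A n - \<sigma> n > 0" using A by linarith
        ultimately show ?thesis using dn by (smt (verit) mult_pos_pos)
      qed
      have "\<bar>d (n - 1) * d n\<bar> = - (d (n - 1) * d n)" using IH(1) by (simp add: abs_of_nonpos)
      hence prod: "d (n - 1) * d n = - (\<bar>d (n - 1)\<bar> * \<bar>d n\<bar>)"
        by (simp only: abs_mult)
      have key: "sp n * (d (Suc n) * d n) = - (R * \<bar>d n\<bar>)"
      proof -
        have "sp n * (d (Suc n) * d n) = (sp n * d (Suc n)) * d n" by simp
        also have "\<dots> = - A n * (d n * d n) - sm n * (d (n - 1) * d n)" using deq[OF n1] by (simp add: algebra_simps) (metis distrib_left mult.assoc mult.commute mult_minus_right)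
        also have "\<dots> = - A n * (\<bar>d n\<bar> * \<bar>d n\<bar>) + sm n * (\<bar>d (n - 1)\<bar> * \<bar>d n\<bar>)"
          using prod by (simp add: abs_mult_self_eq)
        also have "\<dots> = - (R * \<bar>d n\<bar>)" by (simp add: R_def algebra_simps)
        finally show ?thesis .
      qed
      have Rn: "R * \<bar>d n\<bar> > 0" using R2 dn by simp
      have spp: "sp n > 0"
      proof (rule ccontr)
        assume "\<not> sp n > 0"
        hence "sp n = 0" using sg by simp
        thus False using key Rn by auto
      qed
      have neg: "d (Suc n) * d n < 0"
      proof (rule ccontr)
        assume "\<not> d (Suc n) * d n < 0"
        hence "sp n * (d (Suc n) * d n) \<ge> 0" using spp by simp
        thus False using key Rn by linarith
      qed
      have "sp n * \<bar>d (Suc n)\<bar> * \<bar>d n\<bar> = R * \<bar>d n\<bar>"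
      proof -
        have "\<bar>sp n * (d (Suc n) * d n)\<bar> = R * \<bar>d n\<bar>" using key Rn by simp
        thus ?thesis using spp by (simp add: abs_mult)
      qed
      hence spR: "sp n * \<bar>d (Suc n)\<bar> = R" using dn by simp
      have "\<sigma> n * \<bar>d (Suc n)\<bar> \<ge> sp n * \<bar>d (Suc n)\<bar>" using sg by (intro mult_right_mono) auto
      hence "\<sigma> n * \<bar>d (Suc n)\<bar> \<ge> \<sigma> n * (2 * \<bar>d n\<bar> - \<bar>d (n - 1)\<bar>)" using spR R1 by (simp add: algebra_simps)
      moreover have "\<sigma> n > 0" using spp sg by linarith
      ultimately have "\<bar>d (Suc n)\<bar> \<ge> 2 * \<bar>d n\<bar> - \<bar>d (n - 1)\<bar>" by simp
      hence "\<bar>d (Suc n)\<bar> - \<bar>d n\<bar> \<ge> e" using IH(2) by linarith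
      moreover have "d n * d (Suc n) \<le> 0" using neg by (simp add: mult.commute)
      ultimately show ?case using sn by simp
    qed
    have G: "\<bar>d (m + k)\<bar> \<ge> (real k + 1) * e" for k
    proof (induction k)
      case 0 then show ?case by (simp add: e_def)
    next
      case (Suc k)
      have "\<bar>d (m + Suc k)\<bar> - \<bar>d (m + k)\<bar> \<ge> e" using P[of "Suc k"] by simp
      thus ?case using Suc.IH by (simp add: algebra_simps)
    qed
    have ev: "\<forall>n\<ge>max 2 (2 * m). ereal (e^2 / 32) \<le> ereal ((1 / (real n)^2) * Q n)"
    proof (intro allI impI)
      fix n assume nn: "n \<ge> max 2 (2 * m)"
      have n2: "n \<ge> 2" and nm: "n \<ge> 2 * m" using nn by auto
      have "\<bar>d n\<bar> \<ge> (real (n - m) + 1) * e" using G[of "n - m"] nm by simp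
      moreover have "real (n - m) + 1 \<ge> real n / 2" using nm by (simp add: of_nat_diff)
      ultimately have g1: "\<bar>d n\<bar> \<ge> real n / 2 * e" using e
        by (smt (verit) mult_right_mono)
      have g2: "real n / 2 * e \<ge> 0" using e by simp
      have lo: "\<bar>d n\<bar>^2 \<ge> (real n / 2 * e)^2" by (rule power_mono[OF g1 g2])
      have "\<bar>d n\<bar>^2 \<le> 2 * (x n ^ 2 + y n ^ 2)"
      proof -
        have "0 \<le> (x n + y n)^2" by simp
        thus ?thesis by (simp add: d_def power2_eq_square algebra_simps)
      qed
      also have "\<dots> \<le> 8 * Q n" using gb[OF hx n2] gb[OF hy n2] by (smt (verit))
      finally have "(real n / 2 * e)^2 \<le> 8 * Q n" using lo by linarith
      hence "real n ^ 2 * (e^2 / 32) \<le> Q n" by (simp add: power_mult_distrib power_divide)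
      hence "e^2 / 32 \<le> Q n / (real n)^2" using n2 by (simp add: pos_le_divide_eq mult.commute)
      thus "ereal (e^2 / 32) \<le> ereal ((1 / (real n)^2) * Q n)" by simp
    qed
    have "ereal (e^2 / 32) \<le> liminf (\<lambda>n. ereal ((1 / (real n)^2) * Q n))"
      by (rule Liminf_bounded) (unfold eventually_sequentially, use ev in blast)
    hence "ereal (e^2 / 32) \<le> 0" using liminf0 by (simp add: Q_def)
    moreover have "e^2 / 32 > 0" using e by simp
    ultimately show False by simp
  qed
qed

end
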